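(* Let $m$ be a positive integer and $\gamma\in C^m(\mathbb{R},\mathbb{R}^3)$. For every $p\in\mathbb{H}$ and all $a,b\in\mathbb{R}$, $$A(p*\gamma;a,b)=A(\gamma;a,b)\quad\text{and}\quad V(p*\gamma;a,b)=V(\gamma;a,b),$$ where $p*\gamma$ is the curve $t\mapsto p*\gamma(t)$.
   Context: $\mathbb{H}$ is $\mathbb{R}^3$ with group law $(x,y,z)*(x',y',z')=(x+x',\,y+y',\,z+z'+2(yx'-xy'))$. $C^m(\mathbb{R},\mathbb{R}^3)$: curves whose components are $m$-times continuously differentiable with bounded $m$th derivative. For $\gamma=(f,g,h)\in C^m(\mathbb{R},\mathbb{R}^3)$ and $a\in\mathbb{R}$, $T_af(x)=\sum_{k=0}^m\frac{f^{(k)}(a)}{k!}(x-a)^k$ (similarly $T_ag$), and for $a,b\in\mathbb{R}$: $A(\gamma;a,b)= h(b)-h(a)-2\int_a^b\big((T_af)'T_ag-(T_ag)'T_af\big) + 2f(a)(g(b)-T_ag(b)) - 2g(a)(f(b)-T_af(b))$, $V(\gamma;a,b)=(b-a)^{2m}+(b-a)^m\int_a^b(|(T_af)'|+|(T_ag)'|)$. *)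

theory Defs
  imports "HOL-Analysis.Analysis"
begin

definition heis_mult :: "real \<times> real \<times> real \<Rightarrow> real \<times> real \<times> real \<Rightarrow> real \<times> real \<times> real" where
  "heis_mult p q = (case p of (x, y, z) \<Rightarrow> case q of (x', y', z') \<Rightarrow>
      (x + x', y + y', z + z' + 2 * (y * x' - x * y')))"

definition Cm_fun :: "nat \<Rightarrow> (real \<Rightarrow> real) \<Rightarrow> bool" where
  "Cm_fun m f \<longleftrightarrow>
     (\<forall>k<m. \<forall>x. ((deriv ^^ k) f has_real_derivative (deriv ^^ Suc k) f x) (at x))
     \<and> continuous_on UNIV ((deriv ^^ m) f)
     \<and> bounded (range ((deriv ^^ m) f))"

definition Cm_curve :: "nat \<Rightarrow> (real \<Rightarrow> real \<times> real \<times> real) \<Rightarrow> bool" where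
  "Cm_curve m \<gamma> \<longleftrightarrow> Cm_fun m (\<lambda>t. fst (\<gamma> t)) \<and> Cm_fun m (\<lambda>t. fst (snd (\<gamma> t)))
     \<and> Cm_fun m (\<lambda>t. snd (snd (\<gamma> t)))"

definition taylor :: "nat \<Rightarrow> (real \<Rightarrow> real) \<Rightarrow> real \<Rightarrow> real \<Rightarrow> real" where
  "taylor m f a x = (\<Sum>k\<le>m. (deriv ^^ k) f a / fact k * (x - a) ^ k)"

definition oint :: "(real \<Rightarrow> real) \<Rightarrow> real \<Rightarrow> real \<Rightarrow> real" where
  "oint F a b = (if a \<le> b then integral {a..b} F else - integral {b..a} F)"

definition Aq :: "nat \<Rightarrow> (real \<Rightarrow> real \<times> real \<times> real) \<Rightarrow> real \<Rightarrow> real \<Rightarrow> real" where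
  "Aq m \<gamma> a b =
    (let f = (\<lambda>t. fst (\<gamma> t)); g = (\<lambda>t. fst (snd (\<gamma> t))); h = (\<lambda>t. snd (snd (\<gamma> t)));
         Tf = taylor m f a; Tg = taylor m g a
     in h b - h a
        - 2 * oint (\<lambda>t. deriv Tf t * Tg t - deriv Tg t * Tf t) a b
        + 2 * f a * (g b - Tg b) - 2 * g a * (f b - Tf b))"

definition Vq :: "nat \<Rightarrow> (real \<Rightarrow> real \<times> real \<times> real) \<Rightarrow> real \<Rightarrow> real \<Rightarrow> real" where
  "Vq m \<gamma> a b =
    (let f = (\<lambda>t. fst (\<gamma> t)); g = (\<lambda>t. fst (snd (\<gamma> t)));
         Tf = taylor m f a; Tg = taylor m g a
     in (b - a) ^ (2 * m) + (b - a) ^ m * oint (\<lambda>t. \<bar>deriv Tf t\<bar> + \<bar>deriv Tg t\<bar>) a b)"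

end

theory Submission
  imports Defs
begin

lemma deriv_add_const: "deriv (\<lambda>t. (c::real) + f t) = deriv f"
proof
  fix x
  have "\<And>D. ((\<lambda>t. c + f t) has_real_derivative D) (at x) \<longleftrightarrow> (f has_real_derivative D) (at x)"
  proof
    fix D assume "((\<lambda>t. c + f t) has_real_derivative D) (at x)"
    from DERIV_diff[OF this DERIV_const[of c]] show "(f has_real_derivative D) (at x)" by simp
  next
    fix D assume "(f has_real_derivative D) (at x)"
    from DERIV_add[OF DERIV_const[of c] this] show "((\<lambda>t. c + f t) has_real_derivative D) (at x)" by simp
  qed
  then show "deriv (\<lambda>t. c + f t) x = deriv f x" unfolding deriv_def by simp
qed

lemma funpow_deriv_add_const: "(deriv ^^ Suc k) (\<lambda>t. (c::real) + f t) = (deriv ^^ Suc k) f"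
  by (simp only: funpow_Suc_right comp_def deriv_add_const)

lemma taylor_add_const: "taylor m (\<lambda>t. c + f t) a = (\<lambda>x. c + taylor m f a x)"
proof
  fix x
  have "taylor m (\<lambda>t. c + f t) a x = (\<Sum>k\<in>insert 0 {1..m}. (deriv ^^ k) (\<lambda>t. c + f t) a / fact k * (x - a) ^ k)"
    unfolding taylor_def by (rule sum.cong) auto
  also have "\<dots> = c + f a + (\<Sum>k\<in>{1..m}. (deriv ^^ k) (\<lambda>t. c + f t) a / fact k * (x - a) ^ k)"
    by (subst sum.insert) auto
  also have "(\<Sum>k\<in>{1..m}. (deriv ^^ k) (\<lambda>t. c + f t) a / fact k * (x - a) ^ k)
      = (\<Sum>k\<in>{1..m}. (deriv ^^ k) f a / fact k * (x - a) ^ k)"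
  proof (rule sum.cong)
    fix k assume "k \<in> {1..m}"
    then obtain j where "k = Suc j" by (cases k) auto
    then show "(deriv ^^ k) (\<lambda>t. c + f t) a / fact k * (x - a) ^ k = (deriv ^^ k) f a / fact k * (x - a) ^ k"
      by (simp only: funpow_deriv_add_const)
  qed simp
  also have "f a + (\<Sum>k\<in>{1..m}. (deriv ^^ k) f a / fact k * (x - a) ^ k) = taylor m f a x"
  proof -
    have "taylor m f a x = (\<Sum>k\<in>insert 0 {1..m}. (deriv ^^ k) f a / fact k * (x - a) ^ k)"
      unfolding taylor_def by (rule sum.cong) auto
    also have "\<dots> = f a + (\<Sum>k\<in>{1..m}. (deriv ^^ k) f a / fact k * (x - a) ^ k)"
      by (subst sum.insert) auto
    finally show ?thesis by simp
  qed
  ultimately show "taylor m (\<lambda>t. c + f t) a x = c + taylor m f a x" by simp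
qed

lemma taylor_at: "taylor m f a a = f a"
proof -
  have "taylor m f a a = (\<Sum>k\<in>insert 0 {1..m}. (deriv ^^ k) f a / fact k * (a - a) ^ k)"
    unfolding taylor_def by (rule sum.cong) auto
  also have "\<dots> = f a" by (subst sum.insert) auto
  finally show ?thesis .
qed

definition tD :: "nat \<Rightarrow> (real \<Rightarrow> real) \<Rightarrow> real \<Rightarrow> real \<Rightarrow> real" where
  "tD m f a x = (\<Sum>k\<le>m. (deriv ^^ k) f a / fact k * (of_nat k * (x - a) ^ (k - 1)))"

lemma taylor_has_deriv: "(taylor m f a has_real_derivative tD m f a x) (at x)"
  unfolding taylor_def tD_def
  by (auto intro!: derivative_eq_intros sum.cong simp: field_simps)

lemma deriv_taylor: "deriv (taylor m f a) = tD m f a"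
  using taylor_has_deriv DERIV_imp_deriv by blast

lemma cont_tD: "continuous_on UNIV (tD m f a)"
  unfolding tD_def by (intro continuous_intros)

lemma cont_taylor: "continuous_on UNIV (taylor m f a)"
  unfolding taylor_def by (intro continuous_intros)

lemma oint_ftc:
  assumes "\<And>x. (P has_real_derivative P' x) (at x)"
  shows "oint P' a b = P b - P a"
proof (cases "a \<le> b")
  case True
  have "(P' has_integral (P b - P a)) {a..b}"
    by (rule fundamental_theorem_of_calculus[OF True])
       (auto intro: has_field_derivative_at_within assms simp: has_real_derivative_iff_has_vector_derivative[symmetric])
  then show ?thesis using True unfolding oint_def by (simp add: integral_unique)
next
  case False
  have "(P' has_integral (P a - P b)) {b..a}"
    by (rule fundamental_theorem_of_calculus) (use False in
       \<open>auto intro: has_field_derivative_at_within assms simp: has_real_derivative_iff_has_vector_derivative[symmetric]\<close>)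
  then show ?thesis using False unfolding oint_def by (simp add: integral_unique)
qed

lemma oint_add:
  assumes "continuous_on UNIV F" "continuous_on UNIV G"
  shows "oint (\<lambda>t. F t + G t) a b = oint F a b + oint G a b"
proof -
  have "\<And>u v. F integrable_on {u..v}" "\<And>u v. G integrable_on {u..v}"
    using assms by (auto intro: integrable_continuous_real continuous_on_subset)
  then show ?thesis unfolding oint_def by (simp add: integral_add)
qed

lemma oint_cmult: "oint (\<lambda>t. c * F t) a b = c * oint F a b"
  unfolding oint_def by simp

theorem lemma3p3:
  fixes m :: nat and \<gamma> :: "real \<Rightarrow> real \<times> real \<times> real"
    and p :: "real \<times> real \<times> real" and a b :: real
  assumes "m \<ge> 1" and "Cm_curve m \<gamma>"
  shows "Aq m (\<lambda>t. heis_mult p (\<gamma> t)) a b = Aq m \<gamma> a b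
       \<and> Vq m (\<lambda>t. heis_mult p (\<gamma> t)) a b = Vq m \<gamma> a b"
proof -
  obtain x0 y0 z0 where p: "p = (x0, y0, z0)" by (cases p) auto
  define f where "f = (\<lambda>t. fst (\<gamma> t))"
  define g where "g = (\<lambda>t. fst (snd (\<gamma> t)))"
  define h where "h = (\<lambda>t. snd (snd (\<gamma> t)))"
  have f': "(\<lambda>t. fst (heis_mult p (\<gamma> t))) = (\<lambda>t. x0 + f t)"
    by (auto simp: p heis_mult_def f_def split: prod.splits)
  have g': "(\<lambda>t. fst (snd (heis_mult p (\<gamma> t)))) = (\<lambda>t. y0 + g t)"
    by (auto simp: p heis_mult_def g_def split: prod.splits)
  have h': "(\<lambda>t. snd (snd (heis_mult p (\<gamma> t)))) = (\<lambda>t. z0 + h t + 2 * (y0 * f t - x0 * g t))"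
    by (auto simp: p heis_mult_def f_def g_def h_def split: prod.splits)
  define Tf where "Tf = taylor m f a"
  define Tg where "Tg = taylor m g a"
  have I: "oint (\<lambda>t. deriv Tf t * (y0 + Tg t) - deriv Tg t * (x0 + Tf t)) a b
     = oint (\<lambda>t. deriv Tf t * Tg t - deriv Tg t * Tf t) a b + y0 * (Tf b - f a) - x0 * (Tg b - g a)"
  proof -
    have e: "(\<lambda>t. deriv Tf t * (y0 + Tg t) - deriv Tg t * (x0 + Tf t))
      = (\<lambda>t. (deriv Tf t * Tg t - deriv Tg t * Tf t) + (y0 * deriv Tf t + (- x0) * deriv Tg t))"
      by (auto simp: algebra_simps)
    have c1: "continuous_on UNIV (\<lambda>t. deriv Tf t * Tg t - deriv Tg t * Tf t)"
      unfolding Tf_def Tg_def deriv_taylor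
      by (intro continuous_intros cont_tD cont_taylor)
    have c2: "continuous_on UNIV (deriv Tf)" "continuous_on UNIV (deriv Tg)"
      unfolding Tf_def Tg_def deriv_taylor by (rule cont_tD)+
    have c3: "continuous_on UNIV (\<lambda>t. y0 * deriv Tf t)" "continuous_on UNIV (\<lambda>t. (-x0) * deriv Tg t)"
      using c2 by (auto intro!: continuous_intros)
    have "oint (deriv Tf) a b = Tf b - f a"
      by (subst oint_ftc[of Tf]) (auto simp: Tf_def deriv_taylor taylor_has_deriv taylor_at)
    moreover have "oint (deriv Tg) a b = Tg b - g a"
      by (subst oint_ftc[of Tg]) (auto simp: Tg_def deriv_taylor taylor_has_deriv taylor_at)
    ultimately show ?thesis
      unfolding e oint_add[OF c1 continuous_on_add[OF c3]] oint_add[OF c3] oint_cmult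
      by simp
  qed
  have A: "Aq m (\<lambda>t. heis_mult p (\<gamma> t)) a b = Aq m \<gamma> a b"
    unfolding Aq_def Let_def f' g' h'
    unfolding f_def[symmetric] g_def[symmetric] h_def[symmetric] taylor_add_const deriv_add_const
    unfolding Tf_def[symmetric] Tg_def[symmetric] I
    by (simp add: algebra_simps f_def g_def h_def)
  have V: "Vq m (\<lambda>t. heis_mult p (\<gamma> t)) a b = Vq m \<gamma> a b"
    unfolding Vq_def Let_def f' g'
    unfolding f_def[symmetric] g_def[symmetric] taylor_add_const deriv_add_const ..
  show ?thesis using A V by simp
qed

end
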